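(* Let $\mathcal C$ be a Clifford circuit with linear outcome code and $M$ a positive integer. The Low-Weight Stabilizer Algorithm on input $(\mathcal C,M)$ returns exactly the set of all connected stabilizers of the spacetime code of $\mathcal C$ of weight at most $M$.
   Context: A Clifford circuit on $n$ qubits is a finite sequence of operations, each a unitary Clifford gate or the measurement of a Hermitian $n$-qubit Pauli, each with a level in $\{1,2,\dots\}$; operations of equal level have disjoint supports and levels are nondecreasing; depth $\Delta$ = maximal level. In circuit order the $j$-th measurement measures $S_j$ at level $\ell_j$ ($j=1,\dots,m$); outcome $o_j=0$ for eigenvalue $+1$, $1$ for $-1$. The outcome code $\mathcal O(\mathcal C)$ is the set of outcome bit-strings occurring with nonzero probability for some input state; $\perp$ refers to $(u|v)=\sum u_iv_i\bmod 2$. $\overline{\mathcal P}_N$ is the $N$-qubit Pauli group modulo phases; $U_\ell$ is the product of unitary gates of level $\ell$. Fault operators $F\in\overline{\mathcal P}_{n(\Delta+1)}$ act on qubits $(\ell+0.5,q)$, $0\le\ell\le\Delta$, $1\le q\le n$, with level components $F_{\ell+0.5}$; $\eta_{\ell+0.5}(P)$ is $P$ at level $\ell+0.5$ and $I$ elsewhere. Back-cumulant $\overleftarrow F$: start with $F$; for $\ell=\Delta,\dots,1$ replace $\overleftarrow F_{\ell-0.5}$ by $\overleftarrow F_{\ell-0.5}\cdot U_\ell^{-1}\overleftarrow F_{\ell+0.5}U_\ell$. $F(u)=\prod_j\eta_{\ell_j-0.5}(S_j^{u_j})$. The stabilizers of the spacetime code are the elements of $\{\overleftarrow{F(u)}:u\in\mathcal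 O(\mathcal C)^\perp\}$; the weight of a stabilizer is the number of qubits on which it acts nontrivially. The spacetime graph $G$ has vertex set $\{1,\dots,n\}\times\{0.5,1.5,\dots,\Delta+0.5\}$ (vertex $(q,\ell+0.5)$ identified with qubit $(\ell+0.5,q)$), and for every operation of level $\ell$ acting on qubits $q_1,\dots,q_t$, all vertices $(q_i,\ell-0.5)$, $(q_i,\ell+0.5)$, $i=1,\dots,t$, are pairwise joined by edges. A stabilizer is connected if its support is nonempty and connected in $G$. Low-Weight Stabilizer Algorithm: start with an empty output set; for every vertex $v$ of $G$, let $A$ be the set of vertices at graph distance at most $\lfloor M/2\rfloor$ from $v$, compute a generating set of the subgroup of stabilizers of the spacetime code whose support is contained in $A$, and add to the output every element of this subgroup of weight at most $M$ whose support is nonempty and connected in $G$. *)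

theory Defs
  imports Complex_Main "Jordan_Normal_Form.Matrix"
begin

text \<open>An n-qubit Pauli modulo phases: qubit q (0-based) carries (x_q, z_q), meaning X^x Z^z.
  Valid n-qubit Paulis are trivial on all qubits q \<ge> n.\<close>
type_synonym pauli = "nat \<Rightarrow> bool \<times> bool"

definition pid :: pauli where "pid = (\<lambda>q. (False, False))"

definition pmul :: "pauli \<Rightarrow> pauli \<Rightarrow> pauli" where
  "pmul P Q = (\<lambda>q. (fst (P q) \<noteq> fst (Q q), snd (P q) \<noteq> snd (Q q)))"

definition pvalid :: "nat \<Rightarrow> pauli \<Rightarrow> bool" where
  "pvalid n P \<longleftrightarrow> (\<forall>q\<ge>n. P q = (False, False))"

definition psupp :: "pauli \<Rightarrow> nat set" where
  "psupp P = {q. P q \<noteq> (False, False)}"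

text \<open>The Hermitian matrix (tensor product of I,X,Y,Z) on 2^n dimensional space representing P;
  basis index a encodes bit string (bit a q = value of qubit q).
  Per qubit the operator is i^(x z) X^x Z^z, so that (1,1) gives Y.\<close>
definition pmat :: "nat \<Rightarrow> pauli \<Rightarrow> complex mat" where
  "pmat n P = mat (2^n) (2^n) (\<lambda>(a, b).
     if (\<forall>q<n. bit a q = (bit b q \<noteq> fst (P q)))
     then \<i> ^ card {q. q < n \<and> fst (P q) \<and> snd (P q)}
          * (-1) ^ card {q. q < n \<and> snd (P q) \<and> bit b q}
     else 0)"

definition adj :: "complex mat \<Rightarrow> complex mat" where
  "adj U = mat (dim_col U) (dim_row U) (\<lambda>(i, j). cnj (U $$ (j, i)))"

text \<open>An operation is a unitary Clifford gate given by its support (the qubits it acts on) and its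
  2^n x 2^n matrix, or the measurement of the Hermitian Pauli (-1)^s * pmat P.\<close>
datatype op = Gate "nat set" "complex mat" | Meas bool pauli

fun op_supp :: "op \<Rightarrow> nat set" where
  "op_supp (Gate T U) = T"
| "op_supp (Meas s P) = psupp P"

definition single_X :: "nat \<Rightarrow> pauli" where
  "single_X q = (\<lambda>r. if r = q then (True, False) else (False, False))"
definition single_Z :: "nat \<Rightarrow> pauli" where
  "single_Z q = (\<lambda>r. if r = q then (False, True) else (False, False))"

definition clifford_gate :: "nat \<Rightarrow> nat set \<Rightarrow> complex mat \<Rightarrow> bool" where
  "clifford_gate n T U \<longleftrightarrow>
     U \<in> carrier_mat (2^n) (2^n) \<and>
     U * adj U = 1\<^sub>m (2^n) \<and>
     (\<forall>P. pvalid n P \<longrightarrow> (\<exists>P' c. pvalid n P' \<and> U * pmat n P * adj U = c \<cdot>\<^sub>m pmat n P')) \<and>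
     (\<forall>q<n. q \<notin> T \<longrightarrow> U * pmat n (single_X q) = pmat n (single_X q) * U
                       \<and> U * pmat n (single_Z q) = pmat n (single_Z q) * U)"

fun op_ok :: "nat \<Rightarrow> op \<Rightarrow> bool" where
  "op_ok n (Gate T U) = clifford_gate n T U"
| "op_ok n (Meas s P) = pvalid n P"

text \<open>A circuit is a list of (level, operation) in circuit order.\<close>
type_synonym circuit = "(nat \<times> op) list"

definition wf_circuit :: "nat \<Rightarrow> circuit \<Rightarrow> bool" where
  "wf_circuit n C \<longleftrightarrow>
     (\<forall>(l, g) \<in> set C. 1 \<le> l \<and> op_supp g \<subseteq> {..<n} \<and> op_ok n g) \<and>
     sorted (map fst C) \<and>
     (\<forall>i j. i < j \<and> j < length C \<and> fst (C ! i) = fst (C ! j) \<longrightarrow>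
        op_supp (snd (C ! i)) \<inter> op_supp (snd (C ! j)) = {})"

definition depth :: "circuit \<Rightarrow> nat" where
  "depth C = fold max (map fst C) 0"

definition meas_list :: "circuit \<Rightarrow> (nat \<times> bool \<times> pauli) list" where
  "meas_list C = concat (map (\<lambda>(l, g). case g of Meas s P \<Rightarrow> [(l, s, P)] | Gate T U \<Rightarrow> []) C)"

text \<open>Projector onto the eigenspace of (-1)^s pmat P with eigenvalue (-1)^o.\<close>
definition proj :: "nat \<Rightarrow> bool \<Rightarrow> pauli \<Rightarrow> bool \<Rightarrow> complex mat" where
  "proj n s P b = (1 / 2) \<cdot>\<^sub>m (1\<^sub>m (2^n) +
      ((if s \<noteq> b then -1 else 1) :: complex) \<cdot>\<^sub>m pmat n P)"

fun kraus :: "nat \<Rightarrow> circuit \<Rightarrow> bool list \<Rightarrow> complex mat" where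
  "kraus n [] os = 1\<^sub>m (2^n)"
| "kraus n ((l, Gate T U) # C) os = kraus n C os * U"
| "kraus n ((l, Meas s P) # C) [] = 0\<^sub>m (2^n) (2^n)"
| "kraus n ((l, Meas s P) # C) (b # os) = kraus n C os * proj n s P b"

definition vnorm2 :: "complex vec \<Rightarrow> real" where
  "vnorm2 v = (\<Sum>i<dim_vec v. (cmod (v $ i))^2)"

definition outcome_prob :: "nat \<Rightarrow> circuit \<Rightarrow> complex vec \<Rightarrow> bool list \<Rightarrow> real" where
  "outcome_prob n C psi os = vnorm2 (kraus n C os *\<^sub>v psi)"

definition outcome_code :: "nat \<Rightarrow> circuit \<Rightarrow> bool list set" where
  "outcome_code n C = {os. length os = length (meas_list C) \<and>
      (\<exists>psi. psi \<in> carrier_vec (2^n) \<and> vnorm2 psi = 1 \<and> outcome_prob n C psi os > 0)}"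

definition linear_code :: "nat \<Rightarrow> bool list set \<Rightarrow> bool" where
  "linear_code m Oc \<longleftrightarrow> (\<forall>u\<in>Oc. length u = m) \<and> replicate m False \<in> Oc \<and>
      (\<forall>u\<in>Oc. \<forall>v\<in>Oc. map2 (\<noteq>) u v \<in> Oc)"

definition perp :: "nat \<Rightarrow> bool list set \<Rightarrow> bool list set" where
  "perp m Oc = {u. length u = m \<and>
      (\<forall>w\<in>Oc. even (card {i. i < m \<and> u ! i \<and> w ! i}))}"

text \<open>A fault operator F: F h is the Pauli at half-level h + 0.5 (h = 0..depth).\<close>
type_synonym fault = "nat \<Rightarrow> pauli"

definition fmul :: "fault \<Rightarrow> fault \<Rightarrow> fault" where
  "fmul F G = (\<lambda>h. pmul (F h) (G h))"

definition fid :: fault where "fid = (\<lambda>h. pid)"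

definition level_unitary :: "nat \<Rightarrow> circuit \<Rightarrow> nat \<Rightarrow> complex mat" where
  "level_unitary n C l = foldr (\<lambda>(l', g) M. case g of
        Gate T U \<Rightarrow> (if l' = l then U * M else M) | Meas s P \<Rightarrow> M) C (1\<^sub>m (2^n))"

definition conj_pauli :: "nat \<Rightarrow> complex mat \<Rightarrow> pauli \<Rightarrow> pauli" where
  "conj_pauli n U P = (THE P'. pvalid n P' \<and> (\<exists>c. adj U * pmat n P * U = c \<cdot>\<^sub>m pmat n P'))"

text \<open>bc_rev k is the back-cumulant at half-level index depth - k.\<close>
fun bc_rev :: "nat \<Rightarrow> circuit \<Rightarrow> fault \<Rightarrow> nat \<Rightarrow> pauli" where
  "bc_rev n C F 0 = F (depth C)"
| "bc_rev n C F (Suc k) = pmul (F (depth C - Suc k))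
      (conj_pauli n (level_unitary n C (depth C - k)) (bc_rev n C F k))"

definition back_cum :: "nat \<Rightarrow> circuit \<Rightarrow> fault \<Rightarrow> fault" where
  "back_cum n C F = (\<lambda>h. if h \<le> depth C then bc_rev n C F (depth C - h) else pid)"

text \<open>F(u) = prod_j eta_{l_j - 0.5}(S_j^{u_j}), i.e. placed at half-level index l_j - 1.\<close>
definition fault_of :: "circuit \<Rightarrow> bool list \<Rightarrow> fault" where
  "fault_of C u = foldr (\<lambda>((l, s, P), b) F.
       if b then (\<lambda>h. if h = l - 1 then pmul P (F h) else F h) else F)
     (zip (meas_list C) u) fid"

definition stabilizers :: "nat \<Rightarrow> circuit \<Rightarrow> fault set" where
  "stabilizers n C = {back_cum n C (fault_of C u) | u.
      u \<in> perp (length (meas_list C)) (outcome_code n C)}"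

text \<open>Support as a set of vertices (q, h) of the spacetime graph; vertex (q, h) is (q, h + 0.5).\<close>
definition fsupp :: "nat \<Rightarrow> circuit \<Rightarrow> fault \<Rightarrow> (nat \<times> nat) set" where
  "fsupp n C F = {(q, h). q < n \<and> h \<le> depth C \<and> F h q \<noteq> (False, False)}"

definition weight :: "nat \<Rightarrow> circuit \<Rightarrow> fault \<Rightarrow> nat" where
  "weight n C F = card (fsupp n C F)"

definition vertices :: "nat \<Rightarrow> circuit \<Rightarrow> (nat \<times> nat) set" where
  "vertices n C = {..<n} \<times> {..depth C}"

definition edges :: "circuit \<Rightarrow> ((nat \<times> nat) \<times> (nat \<times> nat)) set" where
  "edges C = {(v, w). v \<noteq> w \<and> (\<exists>(l, g) \<in> set C. \<exists>q1 \<in> op_supp g. \<exists>q2 \<in> op_supp g.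
        \<exists>h1 \<in> {l - 1, l}. \<exists>h2 \<in> {l - 1, l}. v = (q1, h1) \<and> w = (q2, h2))}"

definition ball :: "nat \<Rightarrow> circuit \<Rightarrow> nat \<times> nat \<Rightarrow> nat \<Rightarrow> (nat \<times> nat) set" where
  "ball n C v d = {w \<in> vertices n C. \<exists>k\<le>d. (v, w) \<in> edges C ^^ k}"

definition connected_in :: "circuit \<Rightarrow> (nat \<times> nat) set \<Rightarrow> bool" where
  "connected_in C S \<longleftrightarrow> S \<noteq> {} \<and>
     (\<forall>v\<in>S. \<forall>w\<in>S. (v, w) \<in> (edges C \<inter> (S \<times> S))\<^sup>*)"

inductive_set gen_subgroup :: "fault set \<Rightarrow> fault set" for S where
  gen_id: "fid \<in> gen_subgroup S"
| gen_mul: "s \<in> S \<Longrightarrow> t \<in> gen_subgroup S \<Longrightarrow> fmul s t \<in> gen_subgroup S"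

definition lwsa_output :: "nat \<Rightarrow> circuit \<Rightarrow> nat \<Rightarrow> fault set" where
  "lwsa_output n C M = (\<Union>v \<in> vertices n C.
     {s \<in> gen_subgroup {t \<in> stabilizers n C. fsupp n C t \<subseteq> ball n C v (M div 2)}.
        weight n C s \<le> M \<and> connected_in C (fsupp n C s)})"

end

theory Submission
  imports Defs "Jordan_Normal_Form.Determinant"
begin

lemma ex_bits: "\<exists>a::nat. a < 2^n \<and> (\<forall>q<n. bit a q = f q)"
proof -
  let ?a = "horner_sum of_bool 2 (map f [0..<n]) :: nat"
  have "take_bit n ?a = ?a" by (simp add: take_bit_horner_sum_bit_eq)
  hence "?a < 2^n" by (metis take_bit_nat_less_exp)
  moreover have "\<forall>q<n. bit ?a q = f q" by (simp add: bit_horner_sum_bit_iff)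
  ultimately show ?thesis by blast
qed
lemma bits_eq: "(a::nat) < 2^n \<Longrightarrow> b < 2^n \<Longrightarrow> \<forall>q<n. bit a q = bit b q \<Longrightarrow> a = b"
  by (metis bit_eq_iff bit_take_bit_iff take_bit_nat_eq_self)

lemma card_symdiff: "finite S \<Longrightarrow> finite T \<Longrightarrow>
  card ((S - T) \<union> (T - S)) + 2 * card (S \<inter> T) = card S + card T"
proof -
  assume f: "finite S" "finite T"
  have e: "S \<union> T = ((S - T) \<union> (T - S)) \<union> (S \<inter> T)" by blast
  have "card (((S - T) \<union> (T - S)) \<union> (S \<inter> T)) = card ((S - T) \<union> (T - S)) + card (S \<inter> T)"
    by (rule card_Un_disjoint) (use f in auto)
  hence "card (S \<union> T) = card ((S - T) \<union> (T - S)) + card (S \<inter> T)" by (subst e)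
  moreover have "card (S \<union> T) + card (S \<inter> T) = card S + card T" using card_Un_Int[OF f] by linarith
  ultimately show ?thesis by simp
qed
lemma sg_symdiff: "finite S \<Longrightarrow> finite T \<Longrightarrow>
  (-1::complex) ^ card ((S - T) \<union> (T - S)) = (-1) ^ card S * (-1) ^ card T"
proof -
  assume f: "finite S" "finite T"
  have "(-1::complex) ^ (card S + card T) = (-1) ^ (card ((S - T) \<union> (T - S)) + 2 * card (S \<inter> T))"
    using card_symdiff[OF f] by simp
  thus ?thesis by (simp add: power_add power_mult)
qed

abbreviation wt :: "nat \<Rightarrow> pauli \<Rightarrow> nat" where
  "wt n P \<equiv> card {q. q < n \<and> fst (P q) \<and> snd (P q)}"

lemma pmat_carrier[simp]: "pmat n P \<in> carrier_mat (2^n) (2^n)"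
  by (simp add: pmat_def)
lemma pmat_dims[simp]: "dim_row (pmat n P) = 2^n" "dim_col (pmat n P) = 2^n"
  by (simp_all add: pmat_def)

lemma pmat_entry: "a < 2^n \<Longrightarrow> b < 2^n \<Longrightarrow> pmat n P $$ (a, b) =
  (if (\<forall>q<n. bit a q = (bit b q \<noteq> fst (P q)))
     then \<i> ^ wt n P * (-1) ^ card {q. q < n \<and> snd (P q) \<and> bit b q} else 0)"
  by (simp add: pmat_def)

lemma pmat_mult: "\<exists>e. e \<noteq> 0 \<and> pmat n P * pmat n Q = e \<cdot>\<^sub>m pmat n (pmul P Q)"
proof -
  define e where "e = \<i> ^ wt n P * \<i> ^ wt n Q * (-1) ^ card {q. q < n \<and> snd (P q) \<and> fst (Q q)}
     / \<i> ^ wt n (pmul P Q)"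
  have "e \<noteq> 0" unfolding e_def by simp
  moreover have "pmat n P * pmat n Q = e \<cdot>\<^sub>m pmat n (pmul P Q)"
  proof (rule eq_matI)
    fix a b assume a: "a < dim_row (e \<cdot>\<^sub>m pmat n (pmul P Q))" and b: "b < dim_col (e \<cdot>\<^sub>m pmat n (pmul P Q))"
    hence a: "a < 2^n" and b: "b < 2^n" by simp_all
    obtain k0 :: nat where k0: "k0 < 2^n" "\<forall>q<n. bit k0 q = (bit b q \<noteq> fst (Q q))"
      using ex_bits[of n "\<lambda>q. bit b q \<noteq> fst (Q q)"] by blast
    have z: "(\<Sum>k\<in>{0..<2^n} - {k0}. pmat n P $$ (a, k) * pmat n Q $$ (k, b)) = 0"
    proof (rule sum.neutral, rule ballI)
      fix k assume "k \<in> {0..<2^n} - {k0}"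
      hence k: "k < 2^n" "k \<noteq> k0" by auto
      have nc: "\<not> (\<forall>q<n. bit k q = (bit b q \<noteq> fst (Q q)))"
      proof
        assume "\<forall>q<n. bit k q = (bit b q \<noteq> fst (Q q))"
        hence "\<forall>q<n. bit k q = bit k0 q" using k0(2) by simp
        from bits_eq[OF k(1) k0(1) this] k(2) show False by simp
      qed
      have "pmat n Q $$ (k, b) = 0" by (simp only: if_not_P[OF nc] pmat_entry[OF k(1) b])
      thus "pmat n P $$ (a, k) * pmat n Q $$ (k, b) = 0" by simp
    qed
    have "(pmat n P * pmat n Q) $$ (a, b) = (\<Sum>k\<in>{0..<2^n}. pmat n P $$ (a, k) * pmat n Q $$ (k, b))"
      using a b by (simp add: scalar_prod_def)
    also have "\<dots> = pmat n P $$ (a, k0) * pmat n Q $$ (k0, b) +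
        (\<Sum>k\<in>{0..<2^n} - {k0}. pmat n P $$ (a, k) * pmat n Q $$ (k, b))"
      by (rule sum.remove) (use k0 in auto)
    also have "\<dots> = pmat n P $$ (a, k0) * pmat n Q $$ (k0, b)" using z by simp
    also have "\<dots> = e * pmat n (pmul P Q) $$ (a, b)"
    proof -
      have cond: "(\<forall>q<n. bit a q = (bit k0 q \<noteq> fst (P q))) \<longleftrightarrow>
                  (\<forall>q<n. bit a q = (bit b q \<noteq> fst (pmul P Q q)))"
        using k0(2) by (auto simp: pmul_def)
      have s1: "{q. q < n \<and> snd (P q) \<and> bit k0 q} =
         ({q. q < n \<and> snd (P q) \<and> bit b q} - {q. q < n \<and> snd (P q) \<and> fst (Q q)}) \<union>
         ({q. q < n \<and> snd (P q) \<and> fst (Q q)} - {q. q < n \<and> snd (P q) \<and> bit b q})"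
        using k0(2) by auto
      have s2: "{q. q < n \<and> snd (pmul P Q q) \<and> bit b q} =
         ({q. q < n \<and> snd (P q) \<and> bit b q} - {q. q < n \<and> snd (Q q) \<and> bit b q}) \<union>
         ({q. q < n \<and> snd (Q q) \<and> bit b q} - {q. q < n \<and> snd (P q) \<and> bit b q})"
        by (auto simp: pmul_def)
      have "\<i> ^ wt n (pmul P Q) \<noteq> 0" by simp
      show ?thesis
      proof (cases "\<forall>q<n. bit a q = (bit b q \<noteq> fst (pmul P Q q))")
        case True
        hence T1: "\<forall>q<n. bit a q = (bit k0 q \<noteq> fst (P q))" using cond by blast
        have e1: "pmat n P $$ (a, k0) = \<i> ^ wt n P * (-1) ^ card {q. q < n \<and> snd (P q) \<and> bit k0 q}"
          by (simp only: pmat_entry[OF a k0(1)] if_P[OF T1])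
        have e2: "pmat n Q $$ (k0, b) = \<i> ^ wt n Q * (-1) ^ card {q. q < n \<and> snd (Q q) \<and> bit b q}"
          by (simp only: pmat_entry[OF k0(1) b] if_P[OF k0(2)])
        have e3: "pmat n (pmul P Q) $$ (a, b) = \<i> ^ wt n (pmul P Q) * (-1) ^ card {q. q < n \<and> snd (pmul P Q q) \<and> bit b q}"
          by (simp only: pmat_entry[OF a b] if_P[OF True])
        show ?thesis unfolding e1 e2 e3 s1 s2 using \<open>\<i> ^ wt n (pmul P Q) \<noteq> 0\<close>
          by (simp add: sg_symdiff e_def)
      next
        case False
        hence T1: "\<not> (\<forall>q<n. bit a q = (bit k0 q \<noteq> fst (P q)))" using cond by blast
        have e1: "pmat n P $$ (a, k0) = 0"
          by (simp only: pmat_entry[OF a k0(1)] if_not_P[OF T1])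
        have e3: "pmat n (pmul P Q) $$ (a, b) = 0"
          by (simp only: pmat_entry[OF a b] if_not_P[OF False])
        show ?thesis unfolding e1 e3 by simp
      qed
    qed
    finally show "(pmat n P * pmat n Q) $$ (a, b) = (e \<cdot>\<^sub>m pmat n (pmul P Q)) $$ (a, b)"
      using a b by simp
  next
    show "dim_row (pmat n P * pmat n Q) = dim_row (e \<cdot>\<^sub>m pmat n (pmul P Q))" by simp
  next
    show "dim_col (pmat n P * pmat n Q) = dim_col (e \<cdot>\<^sub>m pmat n (pmul P Q))" by simp
  qed
  ultimately show ?thesis by blast
qed

lemma smult_smult_m: "(a::complex) \<cdot>\<^sub>m (b \<cdot>\<^sub>m A) = (a * b) \<cdot>\<^sub>m A"
  by (rule eq_matI) auto

lemma pmat_00: "xm < 2^n \<Longrightarrow> \<forall>q<n. bit xm q = fst (P q) \<Longrightarrow> pmat n P $$ (xm, 0) = \<i> ^ wt n P"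
  by (simp add: pmat_entry)

lemma pmat_unique:
  assumes vP: "pvalid n P" and vQ: "pvalid n Q" and eq: "c \<cdot>\<^sub>m pmat n P = d \<cdot>\<^sub>m pmat n Q" and c: "c \<noteq> 0"
  shows "P = Q"
proof -
  have ent: "c * pmat n P $$ (a, b) = d * pmat n Q $$ (a, b)" if "a < 2^n" "b < 2^n" for a b
  proof -
    have "(c \<cdot>\<^sub>m pmat n P) $$ (a, b) = (d \<cdot>\<^sub>m pmat n Q) $$ (a, b)" using eq by simp
    thus ?thesis using that by simp
  qed
  obtain xm :: nat where xm: "xm < 2^n" "\<forall>q<n. bit xm q = fst (P q)"
    using ex_bits[of n "\<lambda>q. fst (P q)"] by blast
  have z0: "(0::nat) < 2^n" by simp
  have "c * pmat n P $$ (xm, 0) \<noteq> 0" using pmat_00[OF xm] c by simp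
  hence nz: "d * pmat n Q $$ (xm, 0) \<noteq> 0" using ent[OF xm(1) z0] by simp
  hence d: "d \<noteq> 0" by auto
  have "pmat n Q $$ (xm, 0) \<noteq> 0" using nz by auto
  hence "\<forall>q<n. bit xm q = (bit 0 q \<noteq> fst (Q q))"
    using pmat_entry[OF xm(1) z0, of Q] by (auto split: if_splits)
  hence fstq: "\<forall>q<n. fst (P q) = fst (Q q)" using xm(2) by simp
  have xmQ: "\<forall>q<n. bit xm q = fst (Q q)" using xm(2) fstq by simp
  have base: "c * \<i> ^ wt n P = d * \<i> ^ wt n Q"
    using ent[OF xm(1) z0] pmat_00[OF xm] pmat_00[OF xm(1) xmQ] by simp
  have sndq: "snd (P q) = snd (Q q)" if q: "q < n" for q
  proof -
    have b: "(2::nat) ^ q < 2 ^ n" using q by simp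
    obtain a :: nat where a: "a < 2^n" "\<forall>r<n. bit a r = (bit ((2::nat) ^ q) r \<noteq> fst (P r))"
      using ex_bits[of n "\<lambda>r. bit ((2::nat) ^ q) r \<noteq> fst (P r)"] by blast
    have aQ: "\<forall>r<n. bit a r = (bit ((2::nat) ^ q) r \<noteq> fst (Q r))" using a(2) fstq by simp
    have sP: "{r. r < n \<and> snd (P r) \<and> bit ((2::nat) ^ q) r} = (if snd (P q) then {q} else {})"
      using q by (auto simp: bit_exp_iff)
    have sQ: "{r. r < n \<and> snd (Q r) \<and> bit ((2::nat) ^ q) r} = (if snd (Q q) then {q} else {})"
      using q by (auto simp: bit_exp_iff)
    have eP: "pmat n P $$ (a, 2^q) = \<i> ^ wt n P * (if snd (P q) then -1 else 1)"
      by (simp only: pmat_entry[OF a(1) b] if_P[OF a(2)] sP) simp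
    have eQ: "pmat n Q $$ (a, 2^q) = \<i> ^ wt n Q * (if snd (Q q) then -1 else 1)"
      by (simp only: pmat_entry[OF a(1) b] if_P[OF aQ] sQ) simp
    have "c * \<i> ^ wt n P * (if snd (P q) then -1 else 1) = d * \<i> ^ wt n Q * (if snd (Q q) then -1 else 1)"
      using ent[OF a(1) b] unfolding eP eQ by (simp only: mult.assoc)
    hence "c * \<i> ^ wt n P * (if snd (P q) then -1 else 1) = c * \<i> ^ wt n P * (if snd (Q q) then -1 else 1)"
      by (simp only: base)
    moreover have "c * \<i> ^ wt n P \<noteq> 0" using c by simp
    ultimately have "(if snd (P q) then -1 else 1 :: complex) = (if snd (Q q) then -1 else 1)"
      using mult_left_cancel[OF \<open>c * \<i> ^ wt n P \<noteq> 0\<close>] by blast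

    thus ?thesis by (auto split: if_splits)
  qed
  show "P = Q"
  proof
    fix q show "P q = Q q"
    proof (cases "q < n")
      case True thus ?thesis using fstq sndq by (simp add: prod_eq_iff)
    next
      case False thus ?thesis using vP vQ by (simp add: pvalid_def)
    qed
  qed
qed

lemma pmat_nz: "pmat n P \<noteq> 0\<^sub>m (2^n) (2^n)"
proof
  assume h: "pmat n P = 0\<^sub>m (2^n) (2^n)"
  obtain xm :: nat where xm: "xm < 2^n" "\<forall>q<n. bit xm q = fst (P q)"
    using ex_bits[of n "\<lambda>q. fst (P q)"] by blast
  have "pmat n P $$ (xm, 0) = 0" using h xm by simp
  thus False using pmat_00[OF xm] by simp
qed

lemma adj_carrier[simp]: "U \<in> carrier_mat a b \<Longrightarrow> adj U \<in> carrier_mat b a"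
  by (simp add: adj_def)

lemma adj_mult: "A \<in> carrier_mat a b \<Longrightarrow> B \<in> carrier_mat b c \<Longrightarrow> adj (A * B) = adj B * adj A"
  by (rule eq_matI) (auto simp: adj_def scalar_prod_def cnj_sum intro!: sum.cong)

lemma adj_one[simp]: "adj (1\<^sub>m k) = 1\<^sub>m k"
  by (rule eq_matI) (auto simp: adj_def)

lemma smult_one_m[simp]: "(1::complex) \<cdot>\<^sub>m A = A"
  by (rule eq_matI) auto

lemma inv_cancel: "(A::complex mat) \<in> carrier_mat N N \<Longrightarrow> B \<in> carrier_mat N N \<Longrightarrow> A * B = 1\<^sub>m N \<Longrightarrow>
   Y \<in> carrier_mat N k \<Longrightarrow> A * (B * Y) = Y"
proof -
  assume a: "A \<in> carrier_mat N N" "B \<in> carrier_mat N N" "A * B = 1\<^sub>m N" "Y \<in> carrier_mat N k"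
  have "A * (B * Y) = (A * B) * Y" using assoc_mult_mat[OF a(1) a(2) a(4)] by simp
  also have "\<dots> = Y" using a(3) left_mult_one_mat[OF a(4)] by simp

  finally show ?thesis .
qed


lemma multN: "A \<in> carrier_mat N N \<Longrightarrow> B \<in> carrier_mat N N \<Longrightarrow> A * B \<in> carrier_mat N N"
  by simp

lemmas assocN = assoc_mult_mat[where n\<^sub>1=N and n\<^sub>2=N and n\<^sub>3=N and n\<^sub>4=N] for N

definition good :: "nat \<Rightarrow> complex mat \<Rightarrow> bool" where
  "good n W \<longleftrightarrow> W \<in> carrier_mat (2^n) (2^n) \<and> adj W * W = 1\<^sub>m (2^n) \<and> W * adj W = 1\<^sub>m (2^n) \<and>
     (\<forall>P. pvalid n P \<longrightarrow> (\<exists>P' c. pvalid n P' \<and> adj W * pmat n P * W = c \<cdot>\<^sub>m pmat n P'))"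

lemma good_one: "good n (1\<^sub>m (2^n))"
  unfolding good_def
proof (intro conjI allI impI)
  fix P assume "pvalid n P"
  moreover have "adj (1\<^sub>m (2^n)) * pmat n P * 1\<^sub>m (2^n) = 1 \<cdot>\<^sub>m pmat n P" by simp
  ultimately show "\<exists>P' c. pvalid n P' \<and> adj (1\<^sub>m (2^n)) * pmat n P * 1\<^sub>m (2^n) = c \<cdot>\<^sub>m pmat n P'"
    by blast
qed auto

lemma good_mult:
  assumes A: "good n A" and B: "good n B"
  shows "good n (A * B)"
proof -
  let ?N = "2^n :: nat"
  have Ac: "A \<in> carrier_mat ?N ?N" and Bc: "B \<in> carrier_mat ?N ?N"
    and A1: "adj A * A = 1\<^sub>m ?N" and A2: "A * adj A = 1\<^sub>m ?N"
    and B1: "adj B * B = 1\<^sub>m ?N" and B2: "B * adj B = 1\<^sub>m ?N"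
    using A B by (auto simp: good_def)
  have aA: "adj A \<in> carrier_mat ?N ?N" and aB: "adj B \<in> carrier_mat ?N ?N" using Ac Bc by auto
  have adjAB: "adj (A * B) = adj B * adj A" using adj_mult[OF Ac Bc] .
  have c1: "adj (A * B) * (A * B) = 1\<^sub>m ?N"
    unfolding adjAB using Ac Bc aA aB A1 B1
    by (simp add: assocN[of _ ?N] inv_cancel[OF aA Ac A1] inv_cancel[OF aB Bc B1] inv_cancel[OF Ac aA A2] inv_cancel[OF Bc aB B2])
  have c2: "(A * B) * adj (A * B) = 1\<^sub>m ?N"
  proof -
    have "A * B * (adj B * adj A) = A * (B * (adj B * adj A))"
      by (rule assoc_mult_mat[OF Ac Bc]) (use aA aB in auto)
    also have "B * (adj B * adj A) = adj A" by (rule inv_cancel[OF Bc aB B2 aA])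
    finally show ?thesis unfolding adjAB using A2 by simp
  qed
  have c3: "\<exists>P' c. pvalid n P' \<and> adj (A * B) * pmat n P * (A * B) = c \<cdot>\<^sub>m pmat n P'"
    if P: "pvalid n P" for P
  proof -
    obtain P1 c where P1: "pvalid n P1" "adj A * pmat n P * A = c \<cdot>\<^sub>m pmat n P1"
      using A P by (auto simp: good_def)
    obtain P2 d where P2: "pvalid n P2" "adj B * pmat n P1 * B = d \<cdot>\<^sub>m pmat n P2"
      using B P1(1) by (auto simp: good_def)
    have "adj (A * B) * pmat n P * (A * B) = adj B * (adj A * pmat n P * A) * B"
      unfolding adjAB using Ac Bc aA aB by (simp add: assocN[of _ ?N] multN[of _ ?N])
    also have "\<dots> = adj B * (c \<cdot>\<^sub>m pmat n P1) * B" using P1(2) by simp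
    also have "\<dots> = c \<cdot>\<^sub>m (adj B * pmat n P1 * B)"
      using mult_smult_distrib[OF aB pmat_carrier, of c] mult_smult_assoc_mat[OF _ Bc, of "adj B * pmat n P1" ?N c] aB
      by simp
    also have "\<dots> = (c * d) \<cdot>\<^sub>m pmat n P2" using P2(2) by (simp add: smult_smult_m)
    finally show ?thesis using P2(1) by blast
  qed
  have "A * B \<in> carrier_mat ?N ?N" using Ac Bc by simp
  thus ?thesis unfolding good_def using c1 c2 c3 by blast
qed

lemma pvalid_pmul: "pvalid n P \<Longrightarrow> pvalid n Q \<Longrightarrow> pvalid n (pmul P Q)"
  by (simp add: pvalid_def pmul_def)

lemma finite_valid: "finite {P. pvalid n P}"
proof -
  let ?g = "\<lambda>l q. if q < n then l ! q else (False, False)"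
  have "{P. pvalid n P} \<subseteq> ?g ` {l. set l \<subseteq> UNIV \<and> length l = n}"
  proof
    fix P assume "P \<in> {P. pvalid n P}"
    hence v: "pvalid n P" by simp
    have "?g (map P [0..<n]) = P"
    proof
      fix q show "?g (map P [0..<n]) q = P q" using v by (auto simp: pvalid_def)
    qed
    thus "P \<in> ?g ` {l. set l \<subseteq> UNIV \<and> length l = n}"
      by (rule image_eqI[OF sym]) simp_all
  qed
  moreover have "finite (?g ` {l. set l \<subseteq> UNIV \<and> length l = n})"
    by (rule finite_imageI) (rule finite_lists_length_eq, simp)
  ultimately show ?thesis by (rule finite_subset)
qed

lemma smult_zero_m: "(0::complex) \<cdot>\<^sub>m A = 0\<^sub>m (dim_row A) (dim_col A)"
  by (rule eq_matI) auto

lemma smult_sand: "A \<in> carrier_mat N N \<Longrightarrow> X \<in> carrier_mat N N \<Longrightarrow> B \<in> carrier_mat N N \<Longrightarrow>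
   A * ((c::complex) \<cdot>\<^sub>m X) * B = c \<cdot>\<^sub>m (A * X * B)"
proof -
  assume a: "A \<in> carrier_mat N N" "X \<in> carrier_mat N N" "B \<in> carrier_mat N N"
  have "A * (c \<cdot>\<^sub>m X) = c \<cdot>\<^sub>m (A * X)" by (rule mult_smult_distrib[OF a(1) a(2)])
  moreover have "(c \<cdot>\<^sub>m (A * X)) * B = c \<cdot>\<^sub>m (A * X * B)"
    by (rule mult_smult_assoc_mat[OF multN[OF a(1) a(2)] a(3)])
  ultimately show ?thesis by simp
qed

lemma sand_back: "A \<in> carrier_mat N N \<Longrightarrow> X \<in> carrier_mat N N \<Longrightarrow> (B::complex mat) \<in> carrier_mat N N \<Longrightarrow>
   B * A = 1\<^sub>m N \<Longrightarrow> B * (A * X * B) * A = X"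
proof -
  assume a: "A \<in> carrier_mat N N" "X \<in> carrier_mat N N" "B \<in> carrier_mat N N" "B * A = 1\<^sub>m N"
  have "B * (A * X * B) * A = B * (A * (X * (B * A)))"
    using a(1-3) by (simp add: assocN[of _ N] multN[of _ N])
  also have "\<dots> = X" using a by (simp add: inv_cancel[OF a(3) a(1) a(4)])
  finally show ?thesis .
qed

lemma sand_split: "A \<in> carrier_mat N N \<Longrightarrow> X \<in> carrier_mat N N \<Longrightarrow> Y \<in> carrier_mat N N \<Longrightarrow>
   (B::complex mat) \<in> carrier_mat N N \<Longrightarrow> B * A = 1\<^sub>m N \<Longrightarrow> A * (X * Y) * B = (A * X * B) * (A * Y * B)"
proof -
  assume a: "A \<in> carrier_mat N N" "X \<in> carrier_mat N N" "Y \<in> carrier_mat N N" "B \<in> carrier_mat N N" "B * A = 1\<^sub>m N"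
  have "(A * X * B) * (A * Y * B) = A * (X * (B * (A * (Y * B))))"
    using a(1-4) by (simp add: assocN[of _ N] multN[of _ N])
  also have "\<dots> = A * (X * (Y * B))" using a by (simp add: inv_cancel[OF a(4) a(1) a(5), where k=N] multN[of _ N])

  also have "\<dots> = A * (X * Y) * B" using a(1-4) by (simp add: assocN[of _ N] multN[of _ N])
  finally show ?thesis by simp
qed

lemma sand_nz: "A \<in> carrier_mat (2^n) (2^n) \<Longrightarrow> (B::complex mat) \<in> carrier_mat (2^n) (2^n) \<Longrightarrow>
   B * A = 1\<^sub>m (2^n) \<Longrightarrow> A * pmat n P * B = c \<cdot>\<^sub>m pmat n P' \<Longrightarrow> c \<noteq> 0"
proof
  assume a: "A \<in> carrier_mat (2^n) (2^n)" "B \<in> carrier_mat (2^n) (2^n)" "B * A = 1\<^sub>m (2^n)"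
    "A * pmat n P * B = c \<cdot>\<^sub>m pmat n P'" "c = 0"
  have "A * pmat n P * B = 0\<^sub>m (2^n) (2^n)" using a(4,5) by (simp add: smult_zero_m)
  hence "pmat n P = B * 0\<^sub>m (2^n) (2^n) * A" using sand_back[OF a(1) pmat_carrier a(2) a(3), of P] by simp
  also have "\<dots> = 0\<^sub>m (2^n) (2^n)" using a(1,2) by simp
  finally show False using pmat_nz by blast
qed

lemma gate_good:
  assumes cg: "clifford_gate n T U"
  shows "good n U"
proof -
  let ?N = "2^n :: nat"
  let ?V = "{P. pvalid n P}"
  have Uc: "U \<in> carrier_mat ?N ?N" and U1: "U * adj U = 1\<^sub>m ?N"
    and cl: "\<And>P. pvalid n P \<Longrightarrow> \<exists>P' c. pvalid n P' \<and> U * pmat n P * adj U = c \<cdot>\<^sub>m pmat n P'"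
    using cg by (auto simp: clifford_gate_def)
  have aU: "adj U \<in> carrier_mat ?N ?N" using Uc by simp
  have U2: "adj U * U = 1\<^sub>m ?N" by (rule mat_mult_left_right_inverse[OF Uc aU U1])
  define phiF where "phiF P = (SOME P'. pvalid n P' \<and> (\<exists>c. U * pmat n P * adj U = c \<cdot>\<^sub>m pmat n P'))" for P
  have phi: "pvalid n (phiF P) \<and> (\<exists>c. U * pmat n P * adj U = c \<cdot>\<^sub>m pmat n (phiF P))" if "pvalid n P" for P
  proof -
    have "\<exists>P'. pvalid n P' \<and> (\<exists>c. U * pmat n P * adj U = c \<cdot>\<^sub>m pmat n P')" using cl[OF that] by blast
    thus ?thesis unfolding phiF_def by (rule someI_ex)
  qed
  have bk: "adj U * (U * pmat n P * adj U) * U = pmat n P" for P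
    by (rule sand_back[OF Uc pmat_carrier aU U2])
  have inj: "inj_on phiF ?V"
  proof (rule inj_onI)
    fix P Q assume P: "P \<in> ?V" and Q: "Q \<in> ?V" and eq: "phiF P = phiF Q"
    obtain c where c: "U * pmat n P * adj U = c \<cdot>\<^sub>m pmat n (phiF P)" using phi P by auto
    obtain d where d: "U * pmat n Q * adj U = d \<cdot>\<^sub>m pmat n (phiF P)" using phi Q eq by auto
    have c0: "c \<noteq> 0" by (rule sand_nz[OF Uc aU U2 c])
    have d0: "d \<noteq> 0" by (rule sand_nz[OF Uc aU U2 d])
    let ?X = "adj U * pmat n (phiF P) * U"
    have pP: "pmat n P = c \<cdot>\<^sub>m ?X" using bk[of P] unfolding c smult_sand[OF aU pmat_carrier Uc] by simp
    have pQ: "pmat n Q = d \<cdot>\<^sub>m ?X" using bk[of Q] unfolding d smult_sand[OF aU pmat_carrier Uc] by simp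
    have "d \<cdot>\<^sub>m pmat n P = c \<cdot>\<^sub>m pmat n Q" unfolding pP pQ smult_smult_m by (simp add: mult.commute)
    thus "P = Q" using pmat_unique[of n P Q d c] P Q d0 by simp
  qed
  have "phiF ` ?V \<subseteq> ?V" using phi by auto
  hence img: "phiF ` ?V = ?V" using endo_inj_surj[OF finite_valid _ inj] by blast
  have cl2: "\<exists>P' c. pvalid n P' \<and> adj U * pmat n P * U = c \<cdot>\<^sub>m pmat n P'" if P: "pvalid n P" for P
  proof -
    from P img obtain Q where Q: "pvalid n Q" "P = phiF Q" by (metis (mono_tags, lifting) imageE mem_Collect_eq)
    obtain c where c: "U * pmat n Q * adj U = c \<cdot>\<^sub>m pmat n P" using phi[OF Q(1)] Q(2) by auto
    have c0: "c \<noteq> 0" by (rule sand_nz[OF Uc aU U2 c])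
    have "c \<cdot>\<^sub>m (adj U * pmat n P * U) = pmat n Q"
      using bk[of Q] unfolding c smult_sand[OF aU pmat_carrier Uc] .
    hence "(1 / c) \<cdot>\<^sub>m (c \<cdot>\<^sub>m (adj U * pmat n P * U)) = (1 / c) \<cdot>\<^sub>m pmat n Q" by simp
    hence "adj U * pmat n P * U = (1 / c) \<cdot>\<^sub>m pmat n Q" using c0 by (simp add: smult_smult_m)
    thus ?thesis using Q(1) by blast
  qed
  show ?thesis unfolding good_def using Uc U1 U2 cl2 by blast
qed

lemma conj_spec:
  assumes W: "good n W" and P: "pvalid n P"
  shows "pvalid n (conj_pauli n W P) \<and> (\<exists>c. adj W * pmat n P * W = c \<cdot>\<^sub>m pmat n (conj_pauli n W P))"
proof -
  let ?N = "2^n :: nat"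
  have Wc: "W \<in> carrier_mat ?N ?N" and W1: "W * adj W = 1\<^sub>m ?N"
    and cl: "\<exists>P' c. pvalid n P' \<and> adj W * pmat n P * W = c \<cdot>\<^sub>m pmat n P'"
    using W P by (auto simp: good_def)
  have aW: "adj W \<in> carrier_mat ?N ?N" using Wc by simp
  have "\<exists>!P'. pvalid n P' \<and> (\<exists>c. adj W * pmat n P * W = c \<cdot>\<^sub>m pmat n P')"
  proof (rule ex_ex1I)
    show "\<exists>P'. pvalid n P' \<and> (\<exists>c. adj W * pmat n P * W = c \<cdot>\<^sub>m pmat n P')" using cl by blast
  next
    fix P1 P2 assume 1: "pvalid n P1 \<and> (\<exists>c. adj W * pmat n P * W = c \<cdot>\<^sub>m pmat n P1)"
      and 2: "pvalid n P2 \<and> (\<exists>c. adj W * pmat n P * W = c \<cdot>\<^sub>m pmat n P2)"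
    then obtain c1 c2 where c1: "adj W * pmat n P * W = c1 \<cdot>\<^sub>m pmat n P1"
      and c2: "adj W * pmat n P * W = c2 \<cdot>\<^sub>m pmat n P2" by blast
    have "c1 \<noteq> 0" by (rule sand_nz[OF aW Wc W1 c1])
    thus "P1 = P2" using pmat_unique[of n P1 P2 c1 c2] 1 2 c1 c2 by simp
  qed
  hence "pvalid n (conj_pauli n W P) \<and> (\<exists>c. adj W * pmat n P * W = c \<cdot>\<^sub>m pmat n (conj_pauli n W P))"
    unfolding conj_pauli_def by (rule theI')
  thus ?thesis .
qed

lemma conj_hom:
  assumes W: "good n W" and P: "pvalid n P" and Q: "pvalid n Q"
  shows "conj_pauli n W (pmul P Q) = pmul (conj_pauli n W P) (conj_pauli n W Q)"
proof -
  let ?N = "2^n :: nat"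
  let ?P' = "conj_pauli n W P" and ?Q' = "conj_pauli n W Q" and ?R = "conj_pauli n W (pmul P Q)"
  have Wc: "W \<in> carrier_mat ?N ?N" and W1: "W * adj W = 1\<^sub>m ?N"
    using W by (auto simp: good_def)
  have aW: "adj W \<in> carrier_mat ?N ?N" using Wc by simp
  obtain c1 where c1: "adj W * pmat n P * W = c1 \<cdot>\<^sub>m pmat n ?P'" and vP': "pvalid n ?P'"
    using conj_spec[OF W P] by blast
  obtain c2 where c2: "adj W * pmat n Q * W = c2 \<cdot>\<^sub>m pmat n ?Q'" and vQ': "pvalid n ?Q'"
    using conj_spec[OF W Q] by blast
  obtain c3 where c3: "adj W * pmat n (pmul P Q) * W = c3 \<cdot>\<^sub>m pmat n ?R" and vR: "pvalid n ?R"
    using conj_spec[OF W pvalid_pmul[OF P Q]] by blast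
  have c30: "c3 \<noteq> 0" by (rule sand_nz[OF aW Wc W1 c3])
  obtain e where e: "e \<noteq> 0" "pmat n P * pmat n Q = e \<cdot>\<^sub>m pmat n (pmul P Q)" using pmat_mult by blast
  obtain e' where e': "pmat n ?P' * pmat n ?Q' = e' \<cdot>\<^sub>m pmat n (pmul ?P' ?Q')" using pmat_mult by blast
  have "e \<cdot>\<^sub>m (adj W * pmat n (pmul P Q) * W) = adj W * (pmat n P * pmat n Q) * W"
    unfolding e(2) smult_sand[OF aW pmat_carrier Wc] ..
  also have "\<dots> = (adj W * pmat n P * W) * (adj W * pmat n Q * W)"
    by (rule sand_split[OF aW pmat_carrier pmat_carrier Wc W1])
  also have "\<dots> = (c1 \<cdot>\<^sub>m pmat n ?P') * (c2 \<cdot>\<^sub>m pmat n ?Q')" unfolding c1 c2 ..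
  also have "\<dots> = (c1 * c2) \<cdot>\<^sub>m (pmat n ?P' * pmat n ?Q')"
    using mult_smult_distrib[OF pmat_carrier[of n ?P'] pmat_carrier[of n ?Q'], of c2]
      mult_smult_assoc_mat[OF pmat_carrier[of n ?P'] smult_carrier_mat[OF pmat_carrier[of n ?Q']], of c1 c2]
    by (simp add: smult_smult_m mult.commute)
  also have "\<dots> = (c1 * c2 * e') \<cdot>\<^sub>m pmat n (pmul ?P' ?Q')" unfolding e' smult_smult_m ..
  finally have "(e * c3) \<cdot>\<^sub>m pmat n ?R = (c1 * c2 * e') \<cdot>\<^sub>m pmat n (pmul ?P' ?Q')"
    unfolding c3 smult_smult_m .
  moreover have "e * c3 \<noteq> 0" using e(1) c30 by simp
  ultimately show ?thesis using pmat_unique vR pvalid_pmul[OF vP' vQ'] by blast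
qed

lemma lu_good_gen:
  "\<forall>(l', g) \<in> set C'. op_ok n g \<Longrightarrow>
   good n (foldr (\<lambda>(l', g) M. case g of Gate T U \<Rightarrow> (if l' = l then U * M else M) | Meas s P \<Rightarrow> M) C' (1\<^sub>m (2^n)))"
proof (induction C')
  case Nil thus ?case by (simp add: good_one)
next
  case (Cons x C')
  obtain l' g where x: "x = (l', g)" by (cases x)
  have IH: "good n (foldr (\<lambda>(l', g) M. case g of Gate T U \<Rightarrow> (if l' = l then U * M else M) | Meas s P \<Rightarrow> M) C' (1\<^sub>m (2^n)))"
    using Cons by simp
  show ?case
  proof (cases g)
    case (Gate T U)
    hence "clifford_gate n T U" using Cons.prems x by simp
    hence "good n U" by (rule gate_good)
    thus ?thesis using IH good_mult x Gate by simp
  next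
    case (Meas s P) thus ?thesis using IH x by simp
  qed
qed

lemma lu_good: "wf_circuit n C \<Longrightarrow> good n (level_unitary n C l)"
  unfolding level_unitary_def by (rule lu_good_gen) (auto simp: wf_circuit_def)

lemma pmul_swap: "pmul (pmul a b) (pmul c d) = pmul (pmul a c) (pmul b d)"
  by (rule ext) (auto simp: pmul_def)

lemma bc_valid: "(\<And>l. good n (level_unitary n C l)) \<Longrightarrow> (\<And>h. pvalid n (F h)) \<Longrightarrow> pvalid n (bc_rev n C F k)"
  by (induction k) (auto intro!: pvalid_pmul dest: conj_spec)

lemma bc_hom:
  assumes g: "\<And>l. good n (level_unitary n C l)" and F: "\<And>h. pvalid n (F h)" and G: "\<And>h. pvalid n (G h)"
  shows "bc_rev n C (fmul F G) k = pmul (bc_rev n C F k) (bc_rev n C G k)"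
proof (induction k)
  case 0 thus ?case by (simp add: fmul_def)
next
  case (Suc k)
  have "conj_pauli n (level_unitary n C (depth C - k)) (pmul (bc_rev n C F k) (bc_rev n C G k)) =
    pmul (conj_pauli n (level_unitary n C (depth C - k)) (bc_rev n C F k))
         (conj_pauli n (level_unitary n C (depth C - k)) (bc_rev n C G k))"
    by (rule conj_hom[OF g bc_valid[OF g F] bc_valid[OF g G]])
  thus ?case using Suc.IH by (simp add: fmul_def pmul_swap)
qed

lemma bcum_hom:
  assumes g: "\<And>l. good n (level_unitary n C l)" and F: "\<And>h. pvalid n (F h)" and G: "\<And>h. pvalid n (G h)"
  shows "back_cum n C (fmul F G) = fmul (back_cum n C F) (back_cum n C G)"
  unfolding back_cum_def using bc_hom[OF g F G]
  by (auto simp: fmul_def pmul_def pid_def fun_eq_iff)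

definition fofl :: "(nat \<times> bool \<times> pauli) list \<Rightarrow> bool list \<Rightarrow> fault" where
  "fofl ms u = foldr (\<lambda>((l, s, P), b) F.
       if b then (\<lambda>h. if h = l - 1 then pmul P (F h) else F h) else F) (zip ms u) fid"

lemma ff_cons: "fofl ((l, s, P) # ms) (a # u) = (if a then (\<lambda>h. if h = l - 1 then pmul P (fofl ms u h) else fofl ms u h) else fofl ms u)"
  unfolding fofl_def by simp

lemma ff_hom: "length u = length ms \<Longrightarrow> length v = length ms \<Longrightarrow>
   fofl ms (map2 (\<noteq>) u v) = fmul (fofl ms u) (fofl ms v)"
proof (induction ms arbitrary: u v)
  case Nil thus ?case by (simp add: fofl_def fmul_def fid_def pid_def pmul_def)
next
  case (Cons m ms)
  obtain a u' where u: "u = a # u'" using Cons.prems by (cases u) auto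
  obtain b v' where v: "v = b # v'" using Cons.prems by (cases v) auto
  obtain l s P where m: "m = (l, s, P)" by (cases m) auto
  have IH: "fofl ms (map2 (\<noteq>) u' v') = fmul (fofl ms u') (fofl ms v')" using Cons u v by simp
  have e1: "fofl (m # ms) (map2 (\<noteq>) u v) = (if a \<noteq> b then (\<lambda>h. if h = l - 1 then pmul P (fofl ms (map2 (\<noteq>) u' v') h) else fofl ms (map2 (\<noteq>) u' v') h) else fofl ms (map2 (\<noteq>) u' v'))"
    using u v m ff_cons[of l s P ms "a \<noteq> b" "map2 (\<noteq>) u' v'"] by simp
  have e2: "fofl (m # ms) u = (if a then (\<lambda>h. if h = l - 1 then pmul P (fofl ms u' h) else fofl ms u' h) else fofl ms u')"
    using u m ff_cons by simp
  have e3: "fofl (m # ms) v = (if b then (\<lambda>h. if h = l - 1 then pmul P (fofl ms v' h) else fofl ms v' h) else fofl ms v')"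
    using v m ff_cons by simp
  show ?case unfolding e1 e2 e3 IH
    by (auto simp: fmul_def pmul_def fun_eq_iff)
qed

lemma ff_valid: "\<forall>(l, s, P) \<in> set ms. pvalid n P \<Longrightarrow> pvalid n (fofl ms u h)"
proof (induction ms arbitrary: u h)
  case Nil thus ?case by (simp add: fofl_def fid_def pid_def pvalid_def)
next
  case (Cons m ms)
  show ?case
  proof (cases u)
    case Nil thus ?thesis by (simp add: fofl_def fid_def pid_def pvalid_def)
  next
    case (Cons a u')
    obtain l s P where m: "m = (l, s, P)" by (cases m) auto
    have "pvalid n (fofl ms u' h')" for h' using Cons.IH Cons.prems by simp
    moreover have "pvalid n P" using Cons.prems m by simp
    ultimately show ?thesis using Cons m by (auto simp: ff_cons intro: pvalid_pmul)
  qed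
qed

lemma meas_valid: "wf_circuit n C \<Longrightarrow> (l, s, P) \<in> set (meas_list C) \<Longrightarrow> pvalid n P"
proof -
  assume wf: "wf_circuit n C" and "(l, s, P) \<in> set (meas_list C)"
  then obtain l' g where lg: "(l', g) \<in> set C"
    and x: "(l, s, P) \<in> set (case g of Meas s P \<Rightarrow> [(l', s, P)] | Gate T U \<Rightarrow> [])"
    unfolding meas_list_def by auto
  from x have "g = Meas s P" by (cases g) auto
  with lg wf show ?thesis unfolding wf_circuit_def by fastforce
qed

lemma fault_of_ff: "fault_of C u = fofl (meas_list C) u"
  by (simp add: fault_of_def fofl_def)

lemma perp_xor:
  assumes u: "u \<in> perp m Oc" and v: "v \<in> perp m Oc"
  shows "map2 (\<noteq>) u v \<in> perp m Oc"
proof -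
  have lu: "length u = m" and lv: "length v = m" using u v by (auto simp: perp_def)
  have "even (card {i. i < m \<and> map2 (\<noteq>) u v ! i \<and> w ! i})" if w: "w \<in> Oc" for w
  proof -
    let ?S = "{i. i < m \<and> u ! i \<and> w ! i}" and ?T = "{i. i < m \<and> v ! i \<and> w ! i}"
    have eq: "{i. i < m \<and> map2 (\<noteq>) u v ! i \<and> w ! i} = (?S - ?T) \<union> (?T - ?S)"
      using lu lv by auto
    have "card ((?S - ?T) \<union> (?T - ?S)) + 2 * card (?S \<inter> ?T) = card ?S + card ?T"
      by (rule card_symdiff) auto
    moreover have "even (card ?S)" "even (card ?T)" using u v w by (auto simp: perp_def)
    ultimately show ?thesis unfolding eq by presburger
  qed
  thus ?thesis using lu lv by (simp add: perp_def)
qed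

lemma stab_mul:
  assumes wf: "wf_circuit n C" and s: "s \<in> stabilizers n C" and t: "t \<in> stabilizers n C"
  shows "fmul s t \<in> stabilizers n C"
proof -
  let ?m = "length (meas_list C)" and ?O = "outcome_code n C"
  obtain u where u: "s = back_cum n C (fault_of C u)" "u \<in> perp ?m ?O" using s by (auto simp: stabilizers_def)
  obtain v where v: "t = back_cum n C (fault_of C v)" "v \<in> perp ?m ?O" using t by (auto simp: stabilizers_def)
  have w: "map2 (\<noteq>) u v \<in> perp ?m ?O" by (rule perp_xor[OF u(2) v(2)])
  have lu: "length u = ?m" and lv: "length v = ?m" using u(2) v(2) by (auto simp: perp_def)
  have mv: "\<forall>(l, s, P) \<in> set (meas_list C). pvalid n P" using meas_valid[OF wf] by auto
  have g: "\<And>l. good n (level_unitary n C l)" using lu_good[OF wf] .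
  have "fault_of C (map2 (\<noteq>) u v) = fmul (fault_of C u) (fault_of C v)"
    unfolding fault_of_ff by (rule ff_hom[OF lu lv])
  hence "back_cum n C (fault_of C (map2 (\<noteq>) u v)) = fmul s t"
    unfolding u(1) v(1) fault_of_ff
    using bcum_hom[OF g, of "fofl (meas_list C) u" "fofl (meas_list C) v"] ff_valid[OF mv] by simp
  hence "fmul s t = back_cum n C (fault_of C (map2 (\<noteq>) u v)) \<and> map2 (\<noteq>) u v \<in> perp ?m ?O" using w by simp
  thus ?thesis unfolding stabilizers_def by blast
qed

lemma stab_fid:
  assumes wf: "wf_circuit n C"
  shows "fid \<in> stabilizers n C"
proof -
  let ?m = "length (meas_list C)" and ?O = "outcome_code n C"
  have e: "{i. i < ?m \<and> replicate ?m False ! i \<and> w ! i} = {}" for w :: "bool list" by auto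
  have "replicate ?m False \<in> perp ?m ?O" unfolding perp_def mem_Collect_eq e by simp
  hence s0: "back_cum n C (fault_of C (replicate ?m False)) \<in> stabilizers n C"
    unfolding stabilizers_def by blast
  have "fmul (back_cum n C (fault_of C (replicate ?m False))) (back_cum n C (fault_of C (replicate ?m False))) = fid"
    by (auto simp: fmul_def pmul_def fid_def pid_def)
  thus ?thesis using stab_mul[OF wf s0 s0] by simp
qed

lemma gen_sub:
  assumes wf: "wf_circuit n C" and S: "S \<subseteq> stabilizers n C" and x: "x \<in> gen_subgroup S"
  shows "x \<in> stabilizers n C"
  using x
proof (induction rule: gen_subgroup.induct)
  case gen_id thus ?case using stab_fid[OF wf] .
next
  case (gen_mul s t) thus ?case using stab_mul[OF wf] S by blast
qed

lemma fmul_fid: "fmul s fid = s"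
  by (auto simp: fmul_def pmul_def fid_def pid_def)

lemma center_exists:
  fixes R :: "('a \<times> 'a) set" and S :: "'a set"
  assumes fin: "finite S" and ne: "S \<noteq> {}" and RS: "R \<subseteq> S \<times> S"
    and sym: "\<And>x y. (x, y) \<in> R \<Longrightarrow> (y, x) \<in> R"
    and conn: "\<And>x y. x \<in> S \<Longrightarrow> y \<in> S \<Longrightarrow> (x, y) \<in> R\<^sup>*"
  shows "\<exists>c\<in>S. \<forall>w\<in>S. \<exists>k \<le> card S div 2. (c, w) \<in> R ^^ k"
proof -
  define d where "d x y = (LEAST k. (x, y) \<in> R ^^ k)" for x y
  have D1: "(x, y) \<in> R ^^ (d x y)" if "x \<in> S" "y \<in> S" for x y
  proof -
    have "\<exists>k. (x, y) \<in> R ^^ k" using conn[OF that] rtrancl_power by blast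
    thus ?thesis unfolding d_def by (rule LeastI_ex)
  qed
  have D2: "d x y \<le> k" if "(x, y) \<in> R ^^ k" for x y k
    unfolding d_def using that by (rule Least_le)
  have tri: "d x z \<le> d x y + d y z" if "x \<in> S" "y \<in> S" "z \<in> S" for x y z
  proof -
    have "(x, z) \<in> R ^^ d x y O R ^^ d y z" using D1 that by blast
    hence "(x, z) \<in> R ^^ (d x y + d y z)" by (simp add: relpow_add)
    thus ?thesis by (rule D2)
  qed
  have inS: "(x, y) \<in> R ^^ k \<Longrightarrow> x \<in> S \<Longrightarrow> y \<in> S" for x y k
  proof (induction k arbitrary: y)
    case 0 thus ?case by simp
  next
    case (Suc k)
    then obtain z where "(x, z) \<in> R ^^ k" "(z, y) \<in> R" by auto
    thus ?case using RS by auto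
  qed
  have mid: "\<exists>z\<in>S. d c z = j \<and> d z w = d c w - j" if "c \<in> S" "w \<in> S" "j \<le> d c w" for c w j
  proof -
    have "(c, w) \<in> R ^^ (j + (d c w - j))" using D1[OF that(1,2)] that(3) by simp
    then obtain z where z: "(c, z) \<in> R ^^ j" "(z, w) \<in> R ^^ (d c w - j)" by (auto simp: relpow_add)
    have zS: "z \<in> S" using inS[OF z(1) that(1)] .
    have "d c z \<le> j" "d z w \<le> d c w - j" using D2 z by auto
    moreover have "d c w \<le> d c z + d z w" using tri that zS by blast
    ultimately show ?thesis using zS that(3) by (intro bexI[of _ z]) auto
  qed
  have d0: "d x x = 0" for x using D2[of x x 0] by simp
  define e where "e x = Max (d x ` S)" for x
  have e_ge: "d x w \<le> e x" if "w \<in> S" for x w unfolding e_def using fin that by auto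
  have e_le: "e x \<le> k" if "\<forall>w\<in>S. d x w \<le> k" for x k unfolding e_def using fin ne that by auto
  obtain c where cS: "c \<in> S" and cmin: "\<forall>y\<in>S. e c \<le> e y"
  proof -
    have "Min (e ` S) \<in> e ` S" using fin ne by simp
    then obtain c where "c \<in> S" "e c = Min (e ` S)" by auto
    moreover have "\<forall>y\<in>S. Min (e ` S) \<le> e y" using fin by simp
    ultimately show ?thesis using that by auto
  qed
  define r where "r = e c"
  obtain x where xS: "x \<in> S" and dx: "d c x = r"
  proof -
    have "Max (d c ` S) \<in> d c ` S" using fin ne by simp
    thus ?thesis using that unfolding r_def e_def by auto
  qed
  define D where "D j = {w \<in> S. d c w = j}" for j
  have Dne: "D j \<noteq> {}" if "j \<le> r" for j
    using mid[OF cS xS, of j] that dx unfolding D_def by auto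
  have two: "2 \<le> card (D j)" if j1: "1 \<le> j" and jr: "j < r" for j
  proof (rule ccontr)
    assume "\<not> 2 \<le> card (D j)"
    hence cle: "card (D j) \<le> 1" by simp
    obtain z where zD: "z \<in> D j" using Dne[of j] jr by auto
    have finD: "finite (D j)" using fin unfolding D_def by simp
    have uniq: "z' = z" if "z' \<in> D j" for z'
    proof (rule ccontr)
      assume "z' \<noteq> z"
      hence "card {z, z'} = 2" by simp
      moreover have "card {z, z'} \<le> card (D j)" using zD that finD by (intro card_mono) auto
      ultimately show False using cle by simp
    qed
    have zS: "z \<in> S" and dz: "d c z = j" using zD unfolding D_def by auto
    obtain u where uS: "u \<in> S" and du: "d c u = 1" and duz: "d u z = j - 1"
      using mid[OF cS zS, of 1] dz j1 by auto
    have "(c, u) \<in> R" using D1[OF cS uS] du by simp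
    hence "(u, c) \<in> R ^^ 1" using sym by simp
    hence duc: "d u c \<le> 1" by (rule D2)
    have "d u w \<le> r - 1" if wS: "w \<in> S" for w
    proof (cases "j \<le> d c w")
      case True
      obtain z' where z'S: "z' \<in> S" and dz': "d c z' = j" and dz'w: "d z' w = d c w - j"
        using mid[OF cS wS True] by auto
      have "z' = z" using uniq z'S dz' unfolding D_def by auto
      hence "d u w \<le> (j - 1) + (d c w - j)" using tri[OF uS zS wS] duz dz'w by simp
      moreover have "d c w \<le> r" using e_ge[OF wS, of c] unfolding r_def .
      ultimately show ?thesis using True j1 by linarith
    next
      case False
      have "d u w \<le> d u c + d c w" using tri[OF uS cS wS] .
      thus ?thesis using duc False jr by linarith
    qed
    hence "e u \<le> r - 1" using e_le by blast
    moreover have "r \<le> e u" using cmin uS unfolding r_def by blast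
    ultimately show False using jr by linarith
  qed
  have rbound: "r \<le> card S div 2"
  proof (cases "r = 0")
    case True thus ?thesis by simp
  next
    case False
    let ?U = "\<Union>j\<in>{1..<r}. D j"
    have finD: "finite (D j)" for j using fin unfolding D_def by simp
    have "card ?U = (\<Sum>j\<in>{1..<r}. card (D j))"
      by (rule card_UN_disjoint) (use finD in \<open>auto simp: D_def\<close>)
    also have "\<dots> \<ge> (\<Sum>j\<in>{1..<r}. 2)" by (rule sum_mono) (use two in auto)
    finally have cU: "2 * (r - 1) \<le> card ?U" by simp
    have cU': "c \<notin> ?U" using d0[of c] unfolding D_def by auto
    have xU: "x \<notin> ?U" using dx unfolding D_def by auto
    have cx: "c \<noteq> x" using d0[of c] dx False by auto
    have sub: "insert c (insert x ?U) \<subseteq> S" using cS xS unfolding D_def by auto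
    have finU: "finite ?U" using finD by simp
    have "card (insert c (insert x ?U)) = card ?U + 2" using cU' xU cx finU by simp
    moreover have "card (insert c (insert x ?U)) \<le> card S" using card_mono[OF fin sub] .
    ultimately show ?thesis using cU False by linarith
  qed
  show ?thesis
  proof (intro bexI[OF _ cS] ballI)
    fix w assume wS: "w \<in> S"
    have "d c w \<le> r" using e_ge[OF wS, of c] unfolding r_def .
    thus "\<exists>k \<le> card S div 2. (c, w) \<in> R ^^ k" using D1[OF cS wS] rbound by (intro exI[of _ "d c w"]) auto
  qed
qed

lemma relpow_mono_sub: "(R :: ('a \<times> 'a) set) \<subseteq> E \<Longrightarrow> R ^^ k \<subseteq> E ^^ k"
  by (induction k) (simp_all add: relcomp_mono)

theorem mainTheorem13:
  fixes n M :: nat and C :: circuit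
  assumes "wf_circuit n C"
    and "linear_code (length (meas_list C)) (outcome_code n C)"
    and "0 < M"
  shows "lwsa_output n C M =
    {s \<in> stabilizers n C. connected_in C (fsupp n C s) \<and> weight n C s \<le> M}"
proof
  show "lwsa_output n C M \<subseteq> {s \<in> stabilizers n C. connected_in C (fsupp n C s) \<and> weight n C s \<le> M}"
  proof
    fix s assume "s \<in> lwsa_output n C M"
    then obtain v where s: "s \<in> gen_subgroup {t \<in> stabilizers n C. fsupp n C t \<subseteq> ball n C v (M div 2)}"
      and w: "weight n C s \<le> M" and c: "connected_in C (fsupp n C s)"
      unfolding lwsa_output_def by blast
    have "s \<in> stabilizers n C" by (rule gen_sub[OF assms(1) _ s]) auto
    thus "s \<in> {s \<in> stabilizers n C. connected_in C (fsupp n C s) \<and> weight n C s \<le> M}"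
      using w c by simp
  qed
next
  show "{s \<in> stabilizers n C. connected_in C (fsupp n C s) \<and> weight n C s \<le> M} \<subseteq> lwsa_output n C M"
  proof
    fix s assume "s \<in> {s \<in> stabilizers n C. connected_in C (fsupp n C s) \<and> weight n C s \<le> M}"
    hence st: "s \<in> stabilizers n C" and c: "connected_in C (fsupp n C s)" and w: "weight n C s \<le> M"
      by auto
    let ?S = "fsupp n C s"
    let ?R = "edges C \<inter> (?S \<times> ?S)"
    have Sv: "?S \<subseteq> vertices n C" unfolding fsupp_def vertices_def by auto
    have fin: "finite ?S" using Sv unfolding vertices_def by (rule finite_subset) simp
    have ne: "?S \<noteq> {}" using c unfolding connected_in_def by simp
    have sym: "(y, x) \<in> ?R" if "(x, y) \<in> ?R" for x y
      using that unfolding edges_def by blast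
    have conn: "(x, y) \<in> ?R\<^sup>*" if "x \<in> ?S" "y \<in> ?S" for x y
      using c that unfolding connected_in_def by blast
    obtain v where vS: "v \<in> ?S" and vc: "\<forall>w\<in>?S. \<exists>k \<le> card ?S div 2. (v, w) \<in> ?R ^^ k"
      using center_exists[OF fin ne _ sym conn] by blast
    have cardS: "card ?S div 2 \<le> M div 2" using w unfolding weight_def by (rule div_le_mono)
    have sub: "?S \<subseteq> ball n C v (M div 2)"
    proof
      fix x assume xS: "x \<in> ?S"
      then obtain k where k: "k \<le> card ?S div 2" "(v, x) \<in> ?R ^^ k" using vc by blast
      have "(v, x) \<in> edges C ^^ k" using relpow_mono_sub[of ?R "edges C" k] k(2) by blast
      thus "x \<in> ball n C v (M div 2)" unfolding ball_def using xS Sv k(1) cardS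
        by (intro CollectI conjI exI[of _ k]) auto
    qed
    have "s \<in> gen_subgroup {t \<in> stabilizers n C. fsupp n C t \<subseteq> ball n C v (M div 2)}"
      using gen_subgroup.gen_mul[OF _ gen_subgroup.gen_id, of s] st sub by (simp add: fmul_fid)
    moreover have "v \<in> vertices n C" using vS Sv by blast
    ultimately show "s \<in> lwsa_output n C M" unfolding lwsa_output_def using w c by blast
  qed
qed

end
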